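(* Let $p$ be a prime, $A$ a torsion-free $\mathbb{Z}_{(p)}$-algebra, $\mathfrak a\subseteq A$ a divided-power ideal, $P,Q\in A[X]$ monic, and $N\ge1$. If $e_n(P)\equiv e_n(Q)\pmod{\mathfrak a}$ for all $1\le n\le N$, then $p_N(P)\equiv p_N(Q)\pmod{N\mathfrak a}$.
   Context: An ideal $\mathfrak a$ of a torsion-free $\mathbb{Z}_{(p)}$-algebra $A$ is a divided-power ideal if $a^p\in p\,\mathfrak a$ for all $a\in\mathfrak a$ (equivalently $a^k/k!\in\mathfrak a$ in $A\otimes\mathbb{Q}$ for all $a\in\mathfrak a$, $k\ge1$). For a monic $P=X^d+a_1X^{d-1}+\dots+a_d\in A[X]$: $e_0(P)=1$, $e_n(P)=(-1)^na_n$ for $1\le n\le d$, $e_n(P)=0$ for $n>d$; and $p_n(P)$ for $n\ge1$ is defined by Newton's identities $p_n(P)=\sum_{i=1}^{n-1}(-1)^{i-1}e_i(P)p_{n-i}(P)+(-1)^{n-1}n\,e_n(P)$ (for $A$ a domain, the $n$-th power sum of the roots of $P$ with multiplicity). $N\mathfrak a=\{Na:a\in\mathfrak a\}$. *)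

theory Defs
  imports "HOL-Computational_Algebra.Computational_Algebra"
begin

definition is_ideal :: "'a::comm_ring_1 set \<Rightarrow> bool" where
  "is_ideal I \<longleftrightarrow> 0 \<in> I \<and> (\<forall>x\<in>I. \<forall>y\<in>I. x + y \<in> I) \<and> (\<forall>r. \<forall>x\<in>I. r * x \<in> I)"

definition nat_mult_set :: "nat \<Rightarrow> 'a::comm_ring_1 set \<Rightarrow> 'a set" where
  "nat_mult_set N I = {of_nat N * x | x. x \<in> I}"

definition torsion_free :: "'a::comm_ring_1 itself \<Rightarrow> bool" where
  "torsion_free _ \<longleftrightarrow> (\<forall>(n::nat) (a::'a). n > 0 \<longrightarrow> of_nat n * a = 0 \<longrightarrow> a = 0)"

definition Zp_local_algebra :: "nat \<Rightarrow> 'a::comm_ring_1 itself \<Rightarrow> bool" where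
  "Zp_local_algebra p _ \<longleftrightarrow> (\<forall>n::nat. coprime n p \<longrightarrow> (\<exists>b::'a. of_nat n * b = 1))"

definition dp_ideal :: "nat \<Rightarrow> 'a::comm_ring_1 set \<Rightarrow> bool" where
  "dp_ideal p I \<longleftrightarrow> is_ideal I \<and> (\<forall>a\<in>I. a ^ p \<in> nat_mult_set p I)"

text \<open>e_n(P) for monic P = X^d + a_1 X^(d-1) + ... + a_d: e_0 = 1, e_n = (-1)^n a_n for
  1 <= n <= d, e_n = 0 for n > d.  Here a_n = coeff P (d - n).\<close>
definition esym :: "'a::comm_ring_1 poly \<Rightarrow> nat \<Rightarrow> 'a" where
  "esym P n = (if n = 0 then 1 else if n \<le> degree P then (-1) ^ n * coeff P (degree P - n) else 0)"

text \<open>p_n(P) via Newton's identities (only meaningful for n >= 1).\<close>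
fun psum :: "'a::comm_ring_1 poly \<Rightarrow> nat \<Rightarrow> 'a" where
  "psum P n = (\<Sum>i\<in>{1..<n}. (-1) ^ (i - 1) * esym P i * psum P (n - i))
              + (-1) ^ (n - 1) * of_nat n * esym P n"

declare psum.simps [simp del]

end

theory Submission
  imports Defs
begin

lemma id_add: "is_ideal I \<Longrightarrow> x \<in> I \<Longrightarrow> y \<in> I \<Longrightarrow> x + y \<in> I"
  unfolding is_ideal_def by blast
lemma id_mult: "is_ideal I \<Longrightarrow> x \<in> I \<Longrightarrow> r * x \<in> I"
  unfolding is_ideal_def by blast
lemma id_mult2: "is_ideal I \<Longrightarrow> x \<in> I \<Longrightarrow> x * r \<in> I"
  unfolding is_ideal_def by (metis mult.commute)
lemma id_zero: "is_ideal I \<Longrightarrow> 0 \<in> I"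
  unfolding is_ideal_def by blast
lemma id_neg: "is_ideal I \<Longrightarrow> x \<in> I \<Longrightarrow> - x \<in> I"
  using id_mult[of I x "-1"] by simp
lemma id_diff: "is_ideal I \<Longrightarrow> x \<in> I \<Longrightarrow> y \<in> I \<Longrightarrow> x - y \<in> I"
  using id_add[of I x "-y"] id_neg by fastforce
lemma id_sum: "is_ideal I \<Longrightarrow> (\<And>i. i \<in> S \<Longrightarrow> f i \<in> I) \<Longrightarrow> sum f S \<in> I"
proof (induction S rule: infinite_finite_induct)
  case (infinite A) then show ?case by (simp add: id_zero)
next
  case empty then show ?case by (simp add: id_zero)
next
  case (insert x F) then show ?case by (simp add: id_add)
qed

lemma coprime_step:
  fixes p j s :: nat
  assumes "prime p" "0 < s" "s < p"
  shows "coprime (p*j + s) p"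
proof -
  have "coprime s p"
    using assms by (metis coprime_commute nat_dvd_not_less prime_imp_coprime_nat)
  moreover have "gcd p (j*p + s) = gcd p s" by (rule gcd_add_mult)
  ultimately show ?thesis by (metis coprime_iff_gcd_eq_1 gcd.commute mult.commute)
qed

lemma fact_partial:
  fixes p j :: nat
  assumes "prime p"
  shows "r < p \<Longrightarrow> \<exists>w. fact (p*j + r) = fact (p*j) * w \<and> coprime w p"
proof (induction r)
  case 0 then show ?case by auto
next
  case (Suc r)
  then obtain w where w: "fact (p*j + r) = (fact (p*j) :: nat) * w" "coprime w p" by auto
  have c: "coprime (p*j + Suc r) p" using coprime_step[OF assms, of "Suc r" j] Suc by simp
  have "fact (p*j + Suc r) = (p*j + Suc r) * (fact (p*j+r) :: nat)" by simp
  also have "\<dots> = fact (p*j) * (w * (p*j + Suc r))" using w by (simp add: algebra_simps)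
  finally have fe: "fact (p*j + Suc r) = fact (p*j) * (w * (p*j + Suc r))" .
  have cw: "coprime (w * (p*j + Suc r)) p" using w(2) c unfolding coprime_mult_left_iff by blast
  show ?case using fe cw by blast
qed

lemma fact_pj:
  fixes p :: nat
  assumes "prime p"
  shows "\<exists>w. fact (p*j) = p^j * fact j * w \<and> coprime w p"
proof (induction j)
  case 0 then show ?case by simp
next
  case (Suc j)
  then obtain w where w: "fact (p*j) = p^j * fact j * w" "coprime w p" by auto
  have pp: "p > 0" using assms prime_gt_0_nat by blast
  obtain v where v: "fact (p*j + (p - 1)) = (fact (p*j) :: nat) * v" "coprime v p"
    using fact_partial[OF assms, of "p - 1" j] pp by auto
  have eq: "p * Suc j = Suc (p*j + (p - 1))" using pp by simp
  have f1: "fact (Suc (p*j + (p-1))) = Suc (p*j + (p-1)) * (fact (p*j + (p - 1)) :: nat)"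
    by (simp only: fact_Suc of_nat_id)
  have "fact (p * Suc j) = Suc (p*j + (p-1)) * (fact (p*j + (p - 1)) :: nat)"
    by (subst eq) (rule f1)
  also have "Suc (p*j + (p-1)) = p * Suc j" using eq by simp
  finally have "fact (p * Suc j) = p * Suc j * (p^j * fact j * w * v)" using w v by simp
  also have "\<dots> = p ^ Suc j * fact (Suc j) * (w * v)" by (simp add: algebra_simps)
  finally show ?case apply (intro exI[of _ "w*v"]) using w v by simp
qed

lemma dp_powers:
  fixes I :: "'a::comm_ring_1 set"
  assumes "prime p" "Zp_local_algebra p TYPE('a)" "dp_ideal p I"
  shows "m \<ge> 1 \<Longrightarrow> \<forall>a\<in>I. \<exists>b\<in>I. a ^ m = of_nat (fact m) * b"
proof (induction m rule: less_induct)
  case (less m)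
  have idl: "is_ideal I" using assms(3) dp_ideal_def by blast
  show ?case
  proof (cases "m = 1")
    case True then show ?thesis by auto
  next
    case False
    then obtain k where k: "m = Suc k" "k \<ge> 1" using less.prems by (cases m) auto
    show ?thesis
    proof (cases "p dvd m")
      case False
      have "coprime m p" using False assms(1) by (metis coprime_commute prime_imp_coprime_nat)
      then obtain u :: 'a where u: "of_nat m * u = 1" using assms(2) unfolding Zp_local_algebra_def by blast
      show ?thesis
      proof
        fix a assume a: "a \<in> I"
        obtain b where b: "b \<in> I" "a ^ k = of_nat (fact k) * b" using less.IH[of k] k a by auto
        have "a ^ m = a * (of_nat (fact k) * b)" using b k by simp
        also have "\<dots> = (of_nat m * u) * (a * (of_nat (fact k) * b))" using u by simp
        also have "\<dots> = of_nat (fact m) * (u * a * b)"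
          using k by (simp add: fact_Suc algebra_simps)
        finally show "\<exists>b\<in>I. a ^ m = of_nat (fact m) * b"
          using id_mult[OF idl id_mult2[OF idl b(1), of a], of u] by (metis mult.assoc mult.commute)
      qed
    next
      case True
      then obtain j where j: "m = p * j" by blast
      have pp: "p > 1" using assms(1) prime_gt_1_nat by blast
      have j1: "j \<ge> 1" using j k by (cases j) auto
      have jm: "j < m" using j pp j1 by simp
      obtain w where w: "fact (p*j) = p^j * fact j * w" "coprime w p" using fact_pj[OF assms(1)] by blast
      obtain u :: 'a where u: "of_nat w * u = 1" using assms(2) w(2) unfolding Zp_local_algebra_def by blast
      show ?thesis
      proof
        fix a assume a: "a \<in> I"
        obtain c where c: "c \<in> I" "a ^ p = of_nat p * c"
          using assms(3) a unfolding dp_ideal_def nat_mult_set_def by blast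
        obtain d where d: "d \<in> I" "c ^ j = of_nat (fact j) * d" using less.IH[OF jm j1] c by auto
        have "a ^ m = (a ^ p) ^ j" by (simp add: j power_mult)
        also have "\<dots> = of_nat p ^ j * of_nat (fact j) * d" using c d by (simp add: power_mult_distrib)
        also have "\<dots> = (of_nat p ^ j * of_nat (fact j) * d) * (of_nat w * u)" using u by simp
        also have "\<dots> = of_nat (p ^ j * fact j * w) * (u * d)"
          by (simp add: algebra_simps)
        also have "\<dots> = of_nat (fact m) * (u * d)" using w j by simp
        finally show "\<exists>b\<in>I. a ^ m = of_nat (fact m) * b" using id_mult[OF idl d(1)] by blast
      qed
    qed
  qed
qed


definition hasdp :: "'b::comm_ring_1 set \<Rightarrow> 'b \<Rightarrow> bool" where
  "hasdp K x \<longleftrightarrow> (\<forall>m\<ge>1. \<exists>y\<in>K. x^m = of_nat (fact m) * y)"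

lemma hasdp_fun:
  assumes "hasdp K x"
  obtains X where "\<And>m. x^m = of_nat (fact m) * X m" "\<And>m. m \<ge> 1 \<Longrightarrow> X m \<in> K"
proof -
  define X where "X m = (if m = 0 then 1 else (SOME y. y \<in> K \<and> x^m = of_nat (fact m) * y))" for m
  have "x^m = of_nat (fact m) * X m \<and> (m \<ge> 1 \<longrightarrow> X m \<in> K)" for m
  proof (cases "m = 0")
    case True then show ?thesis by (simp add: X_def)
  next
    case False
    then have "m \<ge> 1" by simp
    then have "\<exists>y. y \<in> K \<and> x^m = of_nat (fact m) * y" using assms unfolding hasdp_def by blast
    then have h: "(SOME y. y \<in> K \<and> x^m = of_nat (fact m) * y) \<in> K \<and> x^m = of_nat (fact m) * (SOME y. y \<in> K \<and> x^m = of_nat (fact m) * y)" by (rule someI_ex)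
    then show ?thesis using False by (simp add: X_def)
  qed
  then show ?thesis using that by blast
qed

lemma hasdp_add:
  assumes K: "is_ideal K" and hx: "hasdp K x" and hy: "hasdp K y"
  shows "hasdp K (x + y)"
  unfolding hasdp_def
proof (intro allI impI)
  fix m :: nat assume m: "m \<ge> 1"
  obtain X where X: "\<And>m. x^m = of_nat (fact m) * X m" "\<And>m. m \<ge> 1 \<Longrightarrow> X m \<in> K"
    using hasdp_fun[OF hx] by blast
  obtain Y where Y: "\<And>m. y^m = of_nat (fact m) * Y m" "\<And>m. m \<ge> 1 \<Longrightarrow> Y m \<in> K"
    using hasdp_fun[OF hy] by blast
  have "(x + y)^m = (\<Sum>k\<le>m. of_nat (m choose k) * x^k * y^(m-k))" by (rule binomial_ring)
  also have "\<dots> = (\<Sum>k\<le>m. of_nat (fact m) * (X k * Y (m - k)))"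
  proof (rule sum.cong)
    fix k assume "k \<in> {..m}"
    then have km: "k \<le> m" by simp
    have "of_nat (m choose k) * x^k * y^(m-k)
        = of_nat (fact k * fact (m - k) * (m choose k)) * (X k * Y (m - k))"
      using X(1)[of k] Y(1)[of "m-k"] by (simp add: algebra_simps)
    also have "\<dots> = of_nat (fact m) * (X k * Y (m - k))" using binomial_fact_lemma[OF km] by simp
    finally show "of_nat (m choose k) * x^k * y^(m-k) = of_nat (fact m) * (X k * Y (m - k))" .
  qed simp
  also have "\<dots> = of_nat (fact m) * (\<Sum>k\<le>m. X k * Y (m - k))" by (simp add: sum_distrib_left)
  finally have eq: "(x + y)^m = of_nat (fact m) * (\<Sum>k\<le>m. X k * Y (m - k))" .
  have "(\<Sum>k\<le>m. X k * Y (m - k)) \<in> K"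
  proof (rule id_sum[OF K])
    fix k assume "k \<in> {..m}"
    show "X k * Y (m - k) \<in> K"
    proof (cases "k \<ge> 1")
      case True then show ?thesis using X(2) id_mult2[OF K] by blast
    next
      case False then have "m - k \<ge> 1" using m by simp
      then show ?thesis using Y(2) id_mult[OF K] by blast
    qed
  qed
  then show "\<exists>z\<in>K. (x + y)^m = of_nat (fact m) * z" using eq by blast
qed

lemma hasdp_zero: "is_ideal K \<Longrightarrow> hasdp K 0"
  unfolding hasdp_def
proof (intro allI impI)
  fix m :: nat assume "is_ideal K" "m \<ge> 1"
  then show "\<exists>y\<in>K. (0::'a) ^ m = of_nat (fact m) * y" using id_zero by (intro bexI[of _ 0]) (auto simp: power_0_left)
qed

lemma hasdp_sum: "is_ideal K \<Longrightarrow> (\<And>i. i \<in> S \<Longrightarrow> hasdp K (f i)) \<Longrightarrow> hasdp K (sum f S)"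
proof (induction S rule: infinite_finite_induct)
  case (infinite A) then show ?case by (simp add: hasdp_zero)
next
  case empty then show ?case by (simp add: hasdp_zero)
next
  case (insert x F) then show ?case by (simp add: hasdp_add)
qed

definition fJ :: "'a::comm_ring_1 set \<Rightarrow> 'a fps set" where
  "fJ I = {F. \<forall>n. F $ n \<in> I}"

lemma fJ_ideal: "is_ideal I \<Longrightarrow> is_ideal (fJ I)"
  unfolding is_ideal_def fJ_def
  by (auto simp: fps_mult_nth intro!: id_sum[unfolded is_ideal_def] id_mult[unfolded is_ideal_def]
        simp del: fps_mult_nth_0)


lemma trunc_pow:
  fixes A B :: "'a::comm_ring_1 fps"
  assumes "\<forall>i\<le>n. A$i = B$i"
  shows "i \<le> n \<Longrightarrow> (A^m)$i = (B^m)$i"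
proof (induction m arbitrary: i)
  case 0 then show ?case by simp
next
  case (Suc m)
  have "(A^Suc m)$i = (\<Sum>j=0..i. A$j * (A^m)$(i-j))" by (simp add: fps_mult_nth)
  also have "\<dots> = (\<Sum>j=0..i. B$j * (B^m)$(i-j))"
    by (rule sum.cong) (use Suc assms in auto)
  also have "\<dots> = (B^Suc m)$i" by (simp add: fps_mult_nth)
  finally show ?case .
qed

lemma of_nat_fps_nth: "((of_nat k :: 'a::comm_ring_1 fps) * G)$n = of_nat k * G$n"
  by (metis fps_mult_left_const_nth fps_of_nat)

lemma hasdp_monom:
  fixes I :: "'a::comm_ring_1 set"
  assumes DPI: "\<forall>a\<in>I. hasdp I a" and c: "c \<in> I" and idl: "is_ideal I"
  shows "hasdp (fJ I) (fps_const c * fps_X^i)"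
  unfolding hasdp_def
proof (intro allI impI)
  fix m :: nat assume m: "m \<ge> 1"
  obtain y where y: "y \<in> I" "c^m = of_nat (fact m) * y" using DPI c m unfolding hasdp_def by blast
  have "(fps_const c * fps_X^i)^m = fps_const (c^m) * fps_X^(i*m)"
    by (simp add: power_mult_distrib power_mult)
  also have "\<dots> = of_nat (fact m) * (fps_const y * fps_X^(i*m))"
    by (simp only: y(2) fps_const_mult[symmetric] fps_of_nat mult.assoc)
  finally have eq: "(fps_const c * fps_X^i)^m = of_nat (fact m) * (fps_const y * fps_X^(i*m))" .
  have "fps_const y * fps_X^(i*m) \<in> fJ I"
    unfolding fJ_def using y(1) id_zero[OF idl] by auto
  then show "\<exists>z\<in>fJ I. (fps_const c * fps_X^i)^m = of_nat (fact m) * z" using eq by blast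
qed

lemma fps_dp:
  fixes I :: "'a::comm_ring_1 set"
  assumes DPI: "\<forall>a\<in>I. hasdp I a" and idl: "is_ideal I" and F: "F \<in> fJ I" and m: "m \<ge> 1"
  shows "\<exists>y\<in>I. (F^m)$n = of_nat (fact m) * y"
proof -
  define Ft where "Ft = (\<Sum>i=0..n. fps_const (F$i) * fps_X^i)"
  have Ftn: "Ft $ k = (if k \<le> n then F$k else 0)" for k
    unfolding Ft_def fps_sum_nth by (auto simp: if_distrib cong: if_cong)
  have "hasdp (fJ I) Ft"
    unfolding Ft_def
    by (rule hasdp_sum[OF fJ_ideal[OF idl]], rule hasdp_monom[OF DPI _ idl]) (use F in \<open>auto simp: fJ_def\<close>)
  then obtain Y where Y: "Y \<in> fJ I" "Ft^m = of_nat (fact m) * Y" using m unfolding hasdp_def by blast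
  have "(F^m)$n = (Ft^m)$n" by (rule trunc_pow) (auto simp: Ftn)
  also have "\<dots> = of_nat (fact m) * Y$n" using Y(2) by (simp add: of_nat_fps_nth)
  finally show ?thesis using Y(1) unfolding fJ_def by blast
qed

lemma tf_cancel:
  assumes "torsion_free TYPE('a::comm_ring_1)" "k > 0" "of_nat k * (a::'a) = of_nat k * b"
  shows "a = b"
proof -
  have "of_nat k * (a - b) = 0" using assms(3) by (simp add: algebra_simps)
  then have "a - b = 0" using assms(1,2) unfolding torsion_free_def by blast
  then show ?thesis by simp
qed

lemma pow_low_zero:
  fixes F :: "'a::comm_ring_1 fps"
  assumes "F$0 = 0"
  shows "i < k \<Longrightarrow> (F^k)$i = 0"
proof (induction k arbitrary: i)
  case 0 then show ?case by simp
next
  case (Suc k)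
  have "(F^Suc k)$i = (\<Sum>j=0..i. F$j * (F^k)$(i-j))" by (simp add: fps_mult_nth)
  also have "\<dots> = 0"
  proof (rule sum.neutral, intro ballI)
    fix j assume j: "j \<in> {0..i}"
    show "F$j * (F^k)$(i-j) = 0"
    proof (cases "j = 0")
      case True then show ?thesis using assms by simp
    next
      case False then have "i - j < k" using Suc.prems j by auto
      then show ?thesis using Suc.IH by simp
    qed
  qed
  finally show ?case .
qed


lemma key_fps:
  fixes I :: "'a::comm_ring_1 set" and F T :: "'a fps"
  assumes DPI: "\<forall>a\<in>I. hasdp I a" and idl: "is_ideal I" and tf: "torsion_free TYPE('a)"
    and F: "F \<in> fJ I" and F0: "F$0 = 0" and eqT: "(1 + F) * T = fps_deriv F"
  shows "\<exists>y\<in>I. T$n = of_nat (n+1) * y"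
proof -
  define V where "V = fps_right_inverse (1 + F) 1"
  have V: "(1 + F) * V = 1" unfolding V_def by (rule fps_right_inverse) (simp add: F0)
  have T: "T = V * fps_deriv F"
  proof -
    have "T = (V * (1 + F)) * T" using V by (simp add: mult.commute)
    also have "\<dots> = V * fps_deriv F" using eqT by (simp add: mult.assoc)
    finally show ?thesis .
  qed
  define M where "M = Suc n"
  define Sg where "Sg = (\<Sum>i<M. (-F)^i)"
  have geo: "1 - (-F)^M = (1 + F) * Sg" unfolding Sg_def using one_diff_power_eq[of "-F" M] by simp
  have VS: "V = Sg + (-F)^M * V"
  proof -
    have "V = V * (1 - (-F)^M) + (-F)^M * V" by (simp add: algebra_simps)
    also have "\<dots> = (V * (1 + F)) * Sg + (-F)^M * V" by (simp add: geo mult.assoc)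
    also have "\<dots> = Sg + (-F)^M * V" using V by (simp add: mult.commute)
    finally show ?thesis .
  qed
  have mF0: "(-F)$0 = 0" using F0 by simp
  have zl: "((-F)^M)$i = 0" if "i \<le> n" for i
    using pow_low_zero[OF mF0, of i M] that unfolding M_def by linarith
  have hi: "((-F)^M * W)$n = 0" for W
    unfolding fps_mult_nth by (intro sum.neutral ballI) (simp add: zl)
  have Tn: "T$n = (\<Sum>k<M. ((-F)^k * fps_deriv F)$n)"
  proof -
    have "V * fps_deriv F = (Sg + (-F)^M * V) * fps_deriv F"
      using arg_cong[OF VS, of "\<lambda>x. x * fps_deriv F"] .
    also have "\<dots> = Sg * fps_deriv F + (-F)^M * (V * fps_deriv F)" by (simp only: distrib_right mult.assoc)
    finally have "T = Sg * fps_deriv F + (-F)^M * (V * fps_deriv F)" using T by simp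
    then have "T$n = (Sg * fps_deriv F)$n" using hi by simp
    also have "\<dots> = (\<Sum>k<M. ((-F)^k * fps_deriv F)$n)"
      unfolding Sg_def sum_distrib_right fps_sum_nth ..
    finally show ?thesis .
  qed
  have trm: "\<exists>z\<in>I. ((-F)^k * fps_deriv F)$n = of_nat (n+1) * z" for k
  proof -
    obtain y where y: "y \<in> I" "(F^(k+1))$(n+1) = of_nat (fact (k+1)) * y"
      using fps_dp[OF DPI idl F, of "k+1" "n+1"] by auto
    have "of_nat (k+1) * (F^k * fps_deriv F)$n = (fps_deriv (F^(k+1)))$n"
      by (simp only: fps_deriv_power' of_nat_fps_nth[symmetric] diff_Suc_1 add_Suc_right add_0_right)
         (simp add: algebra_simps)
    also have "\<dots> = of_nat (n+1) * (F^(k+1))$(n+1)" by (simp only: fps_deriv_nth)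
    also have "\<dots> = of_nat (k+1) * (of_nat (n+1) * (of_nat (fact k) * y))"
      using y(2) by (simp add: fact_Suc algebra_simps)
    finally have "(F^k * fps_deriv F)$n = of_nat (n+1) * (of_nat (fact k) * y)"
      using tf_cancel[OF tf, of "k+1"] by simp
    moreover have "((-F)^k * fps_deriv F)$n = (-1)^k * (F^k * fps_deriv F)$n"
    proof -
      have m1: "(-1::'a fps)^k = fps_const ((-1)^k)"
      proof -
        have c1: "fps_const (-1::'a) = -1" by (metis fps_const_1_eq_1 fps_const_neg)
        show ?thesis by (metis c1 fps_const_power)
      qed
      have "(-F)^k * fps_deriv F = fps_const ((-1)^k) * (F^k * fps_deriv F)"
        by (simp only: power_minus[of F k] m1 mult.assoc)
      then show ?thesis by (simp only: fps_mult_left_const_nth)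
    qed
    ultimately have "((-F)^k * fps_deriv F)$n = of_nat (n+1) * ((-1)^k * (of_nat (fact k) * y))"
      by (simp add: algebra_simps)
    moreover have "(-1)^k * (of_nat (fact k) * y) \<in> I" using id_mult[OF idl id_mult[OF idl y(1)]] .
    ultimately show ?thesis by blast
  qed
  then obtain z where z: "\<And>k. z k \<in> I \<and> ((-F)^k * fps_deriv F)$n = of_nat (n+1) * z k"
    by metis
  have "T$n = of_nat (n+1) * (\<Sum>k<M. z k)" using Tn z by (simp add: sum_distrib_left)
  moreover have "(\<Sum>k<M. z k) \<in> I" using z by (intro id_sum[OF idl]) auto
  ultimately show ?thesis by blast
qed


fun ps :: "(nat \<Rightarrow> 'a::comm_ring_1) \<Rightarrow> nat \<Rightarrow> 'a" where
  "ps e n = (\<Sum>i\<in>{1..<n}. (-1) ^ (i - 1) * e i * ps e (n - i))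
              + (-1) ^ (n - 1) * of_nat n * e n"

declare ps.simps [simp del]

lemma psum_ps: "psum P n = ps (esym P) n"
proof (induction n rule: less_induct)
  case (less n)
  have "psum P n = (\<Sum>i\<in>{1..<n}. (-1) ^ (i - 1) * esym P i * psum P (n - i))
              + (-1) ^ (n - 1) * of_nat n * esym P n" by (rule psum.simps)
  also have "\<dots> = (\<Sum>i\<in>{1..<n}. (-1) ^ (i - 1) * esym P i * ps (esym P) (n - i))
              + (-1) ^ (n - 1) * of_nat n * esym P n"
    by (intro arg_cong2[where f="(+)"] sum.cong refl) (simp add: less.IH)
  also have "\<dots> = ps (esym P) n" by (rule ps.simps[symmetric])
  finally show ?case .
qed

lemma ps_local: "(\<forall>i\<le>n. e i = e' i) \<Longrightarrow> ps e n = ps e' n"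
proof (induction n rule: less_induct)
  case (less n)
  have "ps e n = (\<Sum>i\<in>{1..<n}. (-1) ^ (i - 1) * e i * ps e (n - i))
              + (-1) ^ (n - 1) * of_nat n * e n" by (rule ps.simps)
  also have "\<dots> = (\<Sum>i\<in>{1..<n}. (-1) ^ (i - 1) * e' i * ps e' (n - i))
              + (-1) ^ (n - 1) * of_nat n * e' n"
    using less.prems by (intro arg_cong2[where f="(+)"] sum.cong refl) (auto simp: less.IH)
  also have "\<dots> = ps e' n" by (rule ps.simps[symmetric])
  finally show ?case .
qed

lemma neg1_sq: "(-1::'a::comm_ring_1)^j * (-1)^j = 1"
  by (simp add: power_mult_distrib[symmetric])

lemma sign_help:
  assumes "1 \<le> i" "i \<le> n"
  shows "(-1::'a::comm_ring_1)^(n-i) = - ((-1)^n * (-1)^(i-1))"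
proof -
  obtain d j where dj: "n - i = d" "i - 1 = j" by blast
  then have n: "n = d + j + 1" using assms by simp
  have "(-1::'a)^n * (-1)^(i-1) = (-1)^d * ((-1)^j * (-1)^j) * (-1)" unfolding n dj(2)
    by (simp add: power_add algebra_simps)
  then show ?thesis using dj by (simp add: neg1_sq)
qed

lemma newton_fps:
  fixes e :: "nat \<Rightarrow> 'a::comm_ring_1"
  assumes e0: "e 0 = 1"
  shows "fps_deriv (Abs_fps e) = Abs_fps e * Abs_fps (\<lambda>n. (-1)^n * ps e (n+1))"
proof (rule fps_ext)
  fix n
  define \<Sigma> where "\<Sigma> = (\<Sum>i=1..n. (-1)^(i-1) * e i * ps e (Suc n - i))"
  have rec: "ps e (Suc n) = \<Sigma> + (-1)^n * of_nat (Suc n) * e (Suc n)"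
    unfolding \<Sigma>_def by (subst ps.simps) (simp add: atLeastLessThanSuc_atLeastAtMost)
  have "(Abs_fps e * Abs_fps (\<lambda>n. (-1)^n * ps e (n+1)))$n
      = (\<Sum>i=0..n. e i * ((-1)^(n-i) * ps e (n - i + 1)))" by (simp add: fps_mult_nth)
  also have "\<dots> = e 0 * ((-1)^(n-0) * ps e (n - 0 + 1)) + (\<Sum>i=Suc 0..n. e i * ((-1)^(n-i) * ps e (n - i + 1)))"
    by (rule sum.atLeast_Suc_atMost) simp
  also have "(\<Sum>i=Suc 0..n. e i * ((-1)^(n-i) * ps e (n - i + 1))) = - ((-1)^n * \<Sigma>)"
    unfolding \<Sigma>_def sum_distrib_left sum_negf[symmetric]
  proof (rule sum.cong)
    fix i assume "i \<in> {1..n}"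
    then have i: "1 \<le> i" "i \<le> n" by auto
    then have s: "n - i + 1 = Suc n - i" by simp
    show "e i * ((-1)^(n-i) * ps e (n - i + 1)) = - ((-1)^n * ((-1)^(i-1) * e i * ps e (Suc n - i)))"
      unfolding s sign_help[OF i] by (simp add: algebra_simps)
  qed simp
  finally have "(Abs_fps e * Abs_fps (\<lambda>n. (-1)^n * ps e (n+1)))$n
      = (-1)^n * ps e (Suc n) - (-1)^n * \<Sigma>" using e0 by simp
  also have "\<dots> = ((-1)^n * (-1)^n) * of_nat (Suc n) * e (Suc n)" unfolding rec by (simp add: algebra_simps)
  also have "\<dots> = fps_deriv (Abs_fps e) $ n" by (simp add: neg1_sq)
  finally show "fps_deriv (Abs_fps e) $ n = (Abs_fps e * Abs_fps (\<lambda>n. (-1)^n * ps e (n+1)))$n" ..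
qed


lemma core_seq:
  fixes I :: "'a::comm_ring_1 set" and e e' :: "nat \<Rightarrow> 'a"
  assumes DPI: "\<forall>a\<in>I. hasdp I a" and idl: "is_ideal I" and tf: "torsion_free TYPE('a)"
    and e0: "e 0 = 1" and e'0: "e' 0 = 1" and ed: "\<forall>n. e n - e' n \<in> I" and N: "N \<ge> 1"
  shows "ps e N - ps e' N \<in> nat_mult_set N I"
proof -
  define E where "E = Abs_fps e"
  define E' where "E' = Abs_fps e'"
  define S where "S = Abs_fps (\<lambda>n. (-1)^n * ps e (n+1))"
  define S' where "S' = Abs_fps (\<lambda>n. (-1)^n * ps e' (n+1))"
  have NE: "fps_deriv E = E * S" unfolding E_def S_def by (rule newton_fps[of e, OF e0])
  have NE': "fps_deriv E' = E' * S'" unfolding E'_def S'_def by (rule newton_fps[of e', OF e'0])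
  define G where "G = fps_right_inverse E' 1"
  have inv: "E' * G = 1" unfolding G_def by (rule fps_right_inverse) (simp add: E'_def e'0)
  define F where "F = (E - E') * G"
  have F1: "1 + F = E * G" unfolding F_def using inv by (simp add: algebra_simps)
  have FJ: "F \<in> fJ I"
    unfolding fJ_def
  proof (intro CollectI allI)
    fix n
    have "F$n = (\<Sum>i=0..n. (E-E')$i * G$(n-i))" unfolding F_def by (rule fps_mult_nth)
    moreover have "(\<Sum>i=0..n. (E-E')$i * G$(n-i)) \<in> I"
      by (rule id_sum[OF idl], rule id_mult2[OF idl]) (simp add: E_def E'_def ed)
    ultimately show "F$n \<in> I" by simp
  qed
  have F0: "F$0 = 0" unfolding F_def by (simp add: E_def E'_def e0 e'0)
  have dG0: "fps_deriv E' * G + E' * fps_deriv G = 0"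
  proof -
    have "fps_deriv (E' * G) = 0" using inv by simp
    then show ?thesis by (simp add: algebra_simps)
  qed
  have dG: "fps_deriv G = - (G * G) * fps_deriv E'"
  proof -
    have "0 = G * (fps_deriv E' * G + E' * fps_deriv G)" using dG0 by simp
    also have "\<dots> = (G * G) * fps_deriv E' + (E' * G) * fps_deriv G" by (simp add: algebra_simps)
    finally show ?thesis using inv by (simp add: eq_neg_iff_add_eq_0 add.commute)
  qed
  have eqT: "(1 + F) * (S - S') = fps_deriv F"
  proof -
    have a: "E * fps_deriv G = - ((E * G) * ((E' * G) * S'))"
      using dG NE' by (simp add: algebra_simps)
    have "fps_deriv F = fps_deriv (1 + F)" by simp
    also have "\<dots> = fps_deriv E * G + E * fps_deriv G" unfolding F1 by simp
    also have "\<dots> = (E * S) * G - (E * G) * S'" unfolding NE a inv by simp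
    also have "\<dots> = (1 + F) * (S - S')" unfolding F1 by (simp add: algebra_simps)
    finally show ?thesis ..
  qed
  obtain y where y: "y \<in> I" "(S - S')$(N-1) = of_nat (N - 1 + 1) * y"
    using key_fps[OF DPI idl tf FJ F0 eqT, of "N-1"] by blast
  have "(S - S')$(N-1) = (-1)^(N-1) * (ps e N - ps e' N)"
    using N by (simp add: S_def S'_def algebra_simps)
  then have "(-1)^(N-1) * ((-1)^(N-1) * (ps e N - ps e' N)) = (-1)^(N-1) * (of_nat N * y)"
    using y N by simp
  then have h: "(-1)^(N-1) * ((-1)^(N-1) * (ps e N - ps e' N)) = (-1)^(N-1) * (of_nat N * y)" .
  have "ps e N - ps e' N = ((-1)^(N-1) * (-1)^(N-1)) * (ps e N - ps e' N)" by (simp only: neg1_sq mult_1)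
  also have "\<dots> = (-1)^(N-1) * ((-1)^(N-1) * (ps e N - ps e' N))" by (rule mult.assoc)
  also have "\<dots> = (-1)^(N-1) * (of_nat N * y)" by (rule h)
  also have "\<dots> = of_nat N * ((-1)^(N-1) * y)" by (rule mult.left_commute)
  finally have "ps e N - ps e' N = of_nat N * ((-1)^(N-1) * y)" .
  moreover have "(-1)^(N-1) * y \<in> I" using id_mult[OF idl y(1)] .
  ultimately show ?thesis unfolding nat_mult_set_def by blast
qed

theorem proposition2p9:
  fixes p N :: nat and \<aa> :: "'a::comm_ring_1 set" and P Q :: "'a poly"
  assumes "prime p"
    and "torsion_free TYPE('a)"
    and "Zp_local_algebra p TYPE('a)"
    and "dp_ideal p \<aa>"
    and "lead_coeff P = 1" and "lead_coeff Q = 1"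
    and "N \<ge> 1"
    and "\<forall>n\<in>{1..N}. esym P n - esym Q n \<in> \<aa>"
  shows "psum P N - psum Q N \<in> nat_mult_set N \<aa>"
proof -
  have idl: "is_ideal \<aa>" using assms(4) unfolding dp_ideal_def by blast
  have DPI: "\<forall>a\<in>\<aa>. hasdp \<aa> a"
    unfolding hasdp_def using dp_powers[OF assms(1,3,4)] by blast
  define e where "e n = (if n \<le> N then esym P n else esym Q n)" for n
  have e0: "e 0 = 1" by (simp add: e_def esym_def)
  have q0: "esym Q 0 = 1" by (simp add: esym_def)
  have ed: "\<forall>n. e n - esym Q n \<in> \<aa>"
  proof
    fix n show "e n - esym Q n \<in> \<aa>"
    proof (cases "n = 0 \<or> n > N")
      case True then show ?thesis using id_zero[OF idl] by (auto simp: e_def esym_def)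
    next
      case False then show ?thesis using assms(8) by (auto simp: e_def)
    qed
  qed
  have "ps e N - ps (esym Q) N \<in> nat_mult_set N \<aa>"
    by (rule core_seq[OF DPI idl assms(2) e0 q0 ed assms(7)])
  moreover have "ps e N = psum P N"
    unfolding psum_ps by (rule ps_local) (simp add: e_def)
  moreover have "ps (esym Q) N = psum Q N" by (simp add: psum_ps)
  ultimately show ?thesis by simp
qed

end
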